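(* Let $M\in\mathbb{R}^{m\times m}$ be symmetric with $k_{\underline m}I_m\le M\le k_{\overline m}I_m$ for constants $0<k_{\underline m}\le k_{\overline m}$ (with $k_{\underline m}<k_{\overline m}$ or equality allowed), let $C\in\mathbb{R}^{m\times m}$, $G\in\mathbb{R}^m$, $v\in\mathbb{R}^m$ satisfy $\|C\|\le k_c\|v\|$ and $\|G\|\le k_g$ for constants $k_c,k_g>0$. Set $\hat M=\frac{2}{k_{\underline m}^{-1}+k_{\overline m}^{-1}}I_m$, $\epsilon=\frac{k_{\underline m}^{-1}-k_{\overline m}^{-1}}{k_{\underline m}^{-1}+k_{\overline m}^{-1}}$, $f(v)=k_{\underline m}^{-1}(k_c\|v\|^2+k_g)$, $F=-M^{-1}(Cv+G)$. For arbitrary $\zeta,u_2\in\mathbb{R}^m$ and $\kappa\ge1$ define $$u_1=\begin{cases}-\frac{\kappa}{1-\epsilon}\frac{\zeta}{\|\zeta\|}\big(\epsilon\|u_2\|+f(v)\big),&\zeta\ne0,\\ 0,&\zeta=0,\end{cases}\qquad Z=u_1+(M^{-1}\hat M-I_m)(u_1+u_2)+F.$$ Then $\zeta^TZ\le0$.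
   Context: $\|\cdot\|$ denotes the Euclidean norm of vectors and the induced spectral norm of matrices. In the application, $M=M_i(q_i)$, $C=C_i(q_i,\dot q_i)$, $G=G_i(q_i)$, $v=\dot q_i$ are the inertia matrix, Coriolis/centrifugal matrix, gravity vector and velocity of an Euler–Lagrange system $M_i(q_i)\ddot q_i+C_i(q_i,\dot q_i)\dot q_i+G_i(q_i)=\tau_i$. *)

theory Defs
  imports "HOL-Analysis.Analysis"
begin

definition spec_norm :: "real^'m^'m \<Rightarrow> real" where
  "spec_norm A = onorm (\<lambda>x. A *v x)"

definition loewner_le :: "real^'m^'m \<Rightarrow> real^'m^'m \<Rightarrow> bool" where
  "loewner_le A B \<longleftrightarrow> (\<forall>x. x \<bullet> ((B - A) *v x) \<ge> 0)"

end

theory Submission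
  imports Defs
begin

lemma polar_bound:
  fixes g :: "real^'m \<Rightarrow> real^'m"
  assumes lin: "linear g" and sy: "\<And>x y. x \<bullet> g y = g x \<bullet> y"
    and qb: "\<And>x. \<bar>x \<bullet> g x\<bar> \<le> e * (norm x)\<^sup>2"
  shows "x \<bullet> g y \<le> e * norm x * norm y"
proof (cases "x = 0 \<or> y = 0")
  case True
  then show ?thesis using lin by (auto simp: linear_0)
next
  case False
  then have nx: "norm x > 0" and ny: "norm y > 0" by auto
  define s where "s = sqrt (norm y / norm x)"
  have sp: "s > 0" using nx ny by (simp add: s_def)
  have s2: "s^2 = norm y / norm x" using nx ny by (simp add: s_def)
  define p where "p = s *\<^sub>R x"
  define q where "q = (1/s) *\<^sub>R y"
  have key: "(p+q) \<bullet> g (p+q) - (p-q) \<bullet> g (p-q) = 4 * (x \<bullet> g y)"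
  proof -
    have "(p+q) \<bullet> g (p+q) - (p-q) \<bullet> g (p-q) = 2 * (p \<bullet> g q) + 2 * (q \<bullet> g p)"
      using lin by (simp add: linear_add linear_diff inner_add_left inner_add_right
          inner_diff_left inner_diff_right)
    also have "q \<bullet> g p = p \<bullet> g q" using sy[of q p] by (simp add: inner_commute)
    also have "p \<bullet> g q = x \<bullet> g y" using lin sp
      by (simp add: p_def q_def linear_scale)
    finally show ?thesis by simp
  qed
  have "(p+q) \<bullet> g (p+q) \<le> e * (norm (p+q))\<^sup>2" using qb[of "p+q"] by linarith
  moreover have "- ((p-q) \<bullet> g (p-q)) \<le> e * (norm (p-q))\<^sup>2" using qb[of "p-q"] by linarith
  moreover have "(norm (p+q))\<^sup>2 + (norm (p-q))\<^sup>2 = 2 * (norm p)\<^sup>2 + 2 * (norm q)\<^sup>2"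
    by (simp add: power2_norm_eq_inner inner_add_left inner_add_right inner_diff_left
        inner_diff_right inner_commute)
  moreover have "(norm p)\<^sup>2 = norm x * norm y"
  proof -
    have "(norm p)\<^sup>2 = s^2 * (norm x)^2" using sp by (simp add: p_def power_mult_distrib)
    also have "\<dots> = norm y / norm x * (norm x)^2" by (simp only: s2)
    also have "\<dots> = norm x * norm y" using nx by (simp add: power2_eq_square)
    finally show ?thesis .
  qed
  moreover have "(norm q)\<^sup>2 = norm x * norm y"
  proof -
    have "(norm q)\<^sup>2 = (norm y)^2 / s^2" using sp by (simp add: q_def power_mult_distrib power_divide)
    also have "\<dots> = (norm y)^2 / (norm y / norm x)" by (simp only: s2)
    also have "\<dots> = norm x * norm y" using nx ny by (simp add: power2_eq_square)
    finally show ?thesis .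
  qed
  ultimately have "4 * (x \<bullet> g y) \<le> e * (4 * (norm x * norm y))"
    using key by (smt (verit, best) distrib_left)
  then show ?thesis by simp
qed

theorem lemma6:
  fixes M C :: "real^'m^'m" and G v \<zeta> u2 :: "real^'m"
    and km kM kc kg \<kappa> :: real
  assumes sym: "transpose M = M"
    and km_pos: "0 < km" and km_le: "km \<le> kM"
    and lowM: "loewner_le (km *\<^sub>R mat 1) M"
    and uppM: "loewner_le M (kM *\<^sub>R mat 1)"
    and kc_pos: "0 < kc" and kg_pos: "0 < kg"
    and Cb: "spec_norm C \<le> kc * norm v"
    and Gb: "norm G \<le> kg"
    and kappa: "\<kappa> \<ge> 1"
  shows
    "let Mhat = (2 / (inverse km + inverse kM)) *\<^sub>R (mat 1 :: real^'m^'m);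
         \<epsilon> = (inverse km - inverse kM) / (inverse km + inverse kM);
         fv = inverse km * (kc * (norm v)\<^sup>2 + kg);
         F = - (matrix_inv M *v (C *v v + G));
         u1 = (if \<zeta> \<noteq> 0
               then - ((\<kappa> / (1 - \<epsilon>)) * (\<epsilon> * norm u2 + fv) / norm \<zeta>) *\<^sub>R \<zeta>
               else 0);
         Z = u1 + ((matrix_inv M ** Mhat - mat 1) *v (u1 + u2)) + F
     in \<zeta> \<bullet> Z \<le> 0"
proof -
  have kMp: "kM > 0" using km_pos km_le by linarith
  have sc: "\<And>k x. (k *\<^sub>R (mat 1 :: real^'m^'m)) *v x = k *\<^sub>R x"
    by (metis scaleR_matrix_vector_assoc matrix_vector_mul_lid)
  have symM: "\<And>x y. x \<bullet> (M *v y) = (M *v x) \<bullet> y"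
    by (metis dot_lmul_matrix sym transpose_matrix_vector)
  have lo: "\<And>x. km * (norm x)\<^sup>2 \<le> x \<bullet> (M *v x)"
  proof -
    fix x
    have "0 \<le> x \<bullet> ((M - km *\<^sub>R mat 1) *v x)" using lowM by (simp add: loewner_le_def)
    then show "km * (norm x)\<^sup>2 \<le> x \<bullet> (M *v x)"
      by (simp add: matrix_vector_mult_diff_rdistrib sc inner_diff_right power2_norm_eq_inner)
  qed
  have up: "\<And>x. x \<bullet> (M *v x) \<le> kM * (norm x)\<^sup>2"
  proof -
    fix x
    have "0 \<le> x \<bullet> ((kM *\<^sub>R mat 1 - M) *v x)" using uppM by (simp add: loewner_le_def)
    then show "x \<bullet> (M *v x) \<le> kM * (norm x)\<^sup>2"
      by (simp add: matrix_vector_mult_diff_rdistrib sc inner_diff_right power2_norm_eq_inner)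
  qed
  have Mbig: "\<And>y. km * norm y \<le> norm (M *v y)"
  proof -
    fix y :: "real^'m"
    show "km * norm y \<le> norm (M *v y)"
    proof (cases "y = 0")
      case True then show ?thesis by simp
    next
      case False
      have "km * (norm y)\<^sup>2 \<le> norm y * norm (M *v y)"
        using lo[of y] norm_cauchy_schwarz[of y "M *v y"] by linarith
      then show ?thesis using False by (simp add: power2_eq_square)
    qed
  qed
  have inv: "invertible M"
    unfolding invertible_left_inverse matrix_left_invertible_ker
  proof (intro allI impI)
    fix x assume "M *v x = 0"
    then have "km * norm x \<le> 0" using Mbig[of x] by simp
    then show "x = 0" using km_pos by (simp add: mult_le_0_iff)
  qed
  define N where "N = matrix_inv M"
  have NM1: "M ** N = mat 1 \<and> N ** M = mat 1"
    using inv unfolding N_def matrix_inv_def invertible_def by (rule someI_ex)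
  have MN: "\<And>x. M *v (N *v x) = x"
    using NM1 by (metis matrix_vector_mul_assoc matrix_vector_mul_lid)
  have Nbd: "\<And>x. norm (N *v x) \<le> inverse km * norm x"
  proof -
    fix x
    have "km * norm (N *v x) \<le> norm x" using Mbig[of "N *v x"] MN[of x] by simp
    then show "norm (N *v x) \<le> inverse km * norm x" using km_pos
      by (simp add: field_simps)
  qed
  have Nsym: "\<And>x y. x \<bullet> (N *v y) = (N *v x) \<bullet> y"
    by (metis MN symM)
  have Nlo: "\<And>x. inverse kM * (norm x)\<^sup>2 \<le> x \<bullet> (N *v x)"
  proof -
    fix x
    define y where "y = N *v x"
    have xe: "x = M *v y" using MN y_def by simp
    define w where "w = kM *\<^sub>R y - M *v y"
    have "0 \<le> w \<bullet> (M *v w)" using lo[of w] km_pos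
      by (smt (verit) zero_le_power2 mult_nonneg_nonneg)
    also have "w \<bullet> (M *v w) = kM^2 * (y \<bullet> (M *v y)) - 2 * kM * ((M *v y) \<bullet> (M *v y))
        + (M *v y) \<bullet> (M *v (M *v y))"
      using symM[of y "M *v y"]
      by (simp add: w_def matrix_vector_mult_diff_distrib matrix_vector_mult_scaleR
          inner_diff_left inner_diff_right power2_eq_square inner_commute)
    also have "(M *v y) \<bullet> (M *v (M *v y)) \<le> kM * ((M *v y) \<bullet> (M *v y))"
      using up[of "M *v y"] by (simp add: power2_norm_eq_inner)
    finally have "0 \<le> kM * (kM * (y \<bullet> (M *v y)) - (M *v y) \<bullet> (M *v y))"
      by (simp add: algebra_simps power2_eq_square)
    then have "(M *v y) \<bullet> (M *v y) \<le> kM * (y \<bullet> (M *v y))" using kMp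
      by (simp add: zero_le_mult_iff)
    moreover have "(norm x)\<^sup>2 = (M *v y) \<bullet> (M *v y)"
      unfolding xe by (simp add: power2_norm_eq_inner)
    moreover have "x \<bullet> (N *v x) = y \<bullet> (M *v y)"
      unfolding y_def[symmetric] by (metis xe inner_commute)
    ultimately have "(norm x)\<^sup>2 \<le> kM * (x \<bullet> (N *v x))" by simp
    then show "inverse kM * (norm x)\<^sup>2 \<le> x \<bullet> (N *v x)" using kMp
      by (simp add: field_simps)
  qed
  have Nup: "\<And>x. x \<bullet> (N *v x) \<le> inverse km * (norm x)\<^sup>2"
  proof -
    fix x
    have "x \<bullet> (N *v x) \<le> norm x * norm (N *v x)" by (rule norm_cauchy_schwarz)
    also have "\<dots> \<le> norm x * (inverse km * norm x)" using Nbd[of x] by (simp add: mult_left_mono)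
    finally show "x \<bullet> (N *v x) \<le> inverse km * (norm x)\<^sup>2" by (simp add: power2_eq_square algebra_simps)
  qed
  define a where "a = inverse km"
  define b where "b = inverse kM"
  define h where "h = 2 / (a + b)"
  define eps where "eps = (a - b) / (a + b)"
  have ap: "a > 0" and bp: "b > 0" and ab: "b \<le> a"
    using km_pos kMp km_le by (auto simp: a_def b_def le_imp_inverse_le)
  have hb: "h * b = 1 - eps" using ap bp by (simp add: h_def eps_def field_simps)
  have ha: "h * a - 1 = eps" using ap bp by (simp add: h_def eps_def field_simps)
  have ha': "h * a = 1 + eps" using ha by linarith
  have hp: "h > 0" using ap bp by (simp add: h_def)
  have epsnn: "eps \<ge> 0" using ap bp ab by (simp add: eps_def)
  have eps1: "1 - eps > 0" using hb mult_pos_pos[OF hp bp] by linarith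
  define g where "g = (\<lambda>x. h *\<^sub>R (N *v x) - x)"
  have glin: "linear g" unfolding g_def
    by (intro linearI) (simp_all add: matrix_vector_right_distrib matrix_vector_mult_scaleR algebra_simps)
  have gsym: "\<And>x y. x \<bullet> g y = g x \<bullet> y"
    using Nsym by (simp add: g_def inner_diff_left inner_diff_right inner_commute)
  have gq: "\<And>x. \<bar>x \<bullet> g x\<bar> \<le> eps * (norm x)\<^sup>2"
  proof -
    fix x
    have e1: "x \<bullet> g x = h * (x \<bullet> (N *v x)) - (norm x)\<^sup>2"
      by (simp add: g_def inner_diff_right power2_norm_eq_inner)
    have "h * (b * (norm x)\<^sup>2) \<le> h * (x \<bullet> (N *v x))"
      using Nlo[of x] hp by (simp add: b_def)
    moreover have "h * (x \<bullet> (N *v x)) \<le> h * (a * (norm x)\<^sup>2)"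
      using Nup[of x] hp by (simp add: a_def)
    ultimately have "(h * b) * (norm x)\<^sup>2 \<le> h * (x \<bullet> (N *v x))"
        "h * (x \<bullet> (N *v x)) \<le> (h * a) * (norm x)\<^sup>2" by (simp_all only: mult.assoc)
    then have "(1 - eps) * (norm x)\<^sup>2 \<le> h * (x \<bullet> (N *v x))"
        "h * (x \<bullet> (N *v x)) \<le> (1 + eps) * (norm x)\<^sup>2" using hb ha' by simp_all
    then show "\<bar>x \<bullet> g x\<bar> \<le> eps * (norm x)\<^sup>2" unfolding e1
      by (simp add: abs_le_iff algebra_simps)
  qed
  have Q: "\<zeta> \<bullet> g u2 \<le> eps * norm \<zeta> * norm u2"
    by (rule polar_bound[OF glin gsym gq])
  define fv where "fv = inverse km * (kc * (norm v)\<^sup>2 + kg)"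
  define F where "F = - (N *v (C *v v + G))"
  have fvnn: "fv \<ge> 0" using km_pos kc_pos kg_pos by (simp add: fv_def)
  have Fb: "\<zeta> \<bullet> F \<le> norm \<zeta> * fv"
  proof -
    have "norm (C *v v) \<le> spec_norm C * norm v"
      unfolding spec_norm_def by (rule onorm) simp
    also have "\<dots> \<le> kc * norm v * norm v" using Cb by (simp add: mult_right_mono)
    finally have "norm (C *v v + G) \<le> kc * (norm v)\<^sup>2 + kg"
      using Gb norm_triangle_ineq[of "C *v v" G] by (simp add: power2_eq_square)
    then have "inverse km * norm (C *v v + G) \<le> fv" unfolding fv_def
      using km_pos by (intro mult_left_mono) auto
    then have "norm F \<le> fv" unfolding F_def
      using Nbd[of "C *v v + G"] by simp
    then show ?thesis using norm_cauchy_schwarz[of \<zeta> F]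
      by (smt (verit) mult_left_mono norm_ge_zero)
  qed
  have Mh: "\<And>w. (N ** (h *\<^sub>R mat 1) - mat 1) *v w = g w"
    by (simp add: g_def matrix_vector_mult_diff_rdistrib matrix_vector_mul_assoc[symmetric] sc
        matrix_vector_mult_scaleR)
  show ?thesis
  proof (cases "\<zeta> = 0")
    case True
    then show ?thesis by (simp add: Let_def)
  next
    case False
    have nz: "norm \<zeta> > 0" using False by simp
    define c where "c = (\<kappa> / (1 - eps)) * (eps * norm u2 + fv)"
    define u1 where "u1 = - (c / norm \<zeta>) *\<^sub>R \<zeta>"
    have neg: "\<And>x. N *v (-x) = -(N *v x)"
      by (metis diff_0 matrix_vector_mult_diff_distrib matrix_vector_mult_0_right)
    have cnn: "c \<ge> 0" using eps1 kappa epsnn fvnn by (simp add: c_def)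
    have exp: "\<zeta> \<bullet> (u1 + g (u1 + u2) + F) = h * (\<zeta> \<bullet> (N *v u1)) + \<zeta> \<bullet> g u2 + \<zeta> \<bullet> F"
      by (simp add: g_def matrix_vector_right_distrib inner_add_right inner_diff_right distrib_left)
    have t1: "h * (\<zeta> \<bullet> (N *v u1)) = - (c / norm \<zeta>) * (h * (\<zeta> \<bullet> (N *v \<zeta>)))"
      using neg by (simp add: u1_def matrix_vector_mult_scaleR)
    have "h * (b * (norm \<zeta>)\<^sup>2) \<le> h * (\<zeta> \<bullet> (N *v \<zeta>))"
      using Nlo[of \<zeta>] hp by (simp add: b_def)
    then have "(c / norm \<zeta>) * ((1 - eps) * (norm \<zeta>)\<^sup>2) \<le> (c / norm \<zeta>) * (h * (\<zeta> \<bullet> (N *v \<zeta>)))"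
      using hb cnn nz by (intro mult_left_mono) (simp_all add: mult.assoc[symmetric])
    moreover have "(c / norm \<zeta>) * ((1 - eps) * (norm \<zeta>)\<^sup>2) = \<kappa> * (eps * norm u2 + fv) * norm \<zeta>"
      using eps1 nz by (simp add: c_def power2_eq_square field_simps)
    ultimately have t1b: "h * (\<zeta> \<bullet> (N *v u1)) \<le> - (\<kappa> * (eps * norm u2 + fv) * norm \<zeta>)"
      using t1 by linarith
    have fin: "\<zeta> \<bullet> (u1 + g (u1 + u2) + F) \<le> 0"
    proof -
      have "\<zeta> \<bullet> (u1 + g (u1 + u2) + F) \<le> - (\<kappa> * (eps * norm u2 + fv) * norm \<zeta>)
            + eps * norm \<zeta> * norm u2 + norm \<zeta> * fv"
        using exp t1b Q Fb by linarith
      also have "\<dots> = (1 - \<kappa>) * ((eps * norm u2 + fv) * norm \<zeta>)" by (simp add: algebra_simps)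
      also have "\<dots> \<le> 0" using kappa epsnn fvnn nz
        by (intro mult_nonpos_nonneg) auto
      finally show ?thesis .
    qed
    have e0: "matrix_inv M = N" by (simp add: N_def)
    have e1: "2 / (inverse km + inverse kM) = h" by (simp add: h_def a_def b_def)
    have e2: "(inverse km - inverse kM) / (inverse km + inverse kM) = eps"
      by (simp add: eps_def a_def b_def)
    have e4: "inverse km * (kc * (norm v)\<^sup>2 + kg) = fv" by (simp add: fv_def)
    have e3: "- (N *v (C *v v + G)) = F" by (simp add: F_def)
    have e5: "(if \<zeta> \<noteq> 0 then - ((\<kappa> / (1 - eps)) * (eps * norm u2 + fv) / norm \<zeta>) *\<^sub>R \<zeta> else 0) = u1"
      using False by (simp add: u1_def c_def)
    show ?thesis
      unfolding Let_def e0 e1 e2 e4 e3 unfolding e5 Mh using fin .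
  qed
qed

end
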